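(* Let $p,n\in\mathbb N$ with $p\ge n\ge 7$, and let $G\in Ex(p;T_n^2)$. If $G$ is connected, then $\Delta(G)=n-4$ and $e(G)=\big[\tfrac{(n-4)p}{2}\big]$.
   Context: All graphs are finite and simple; a graph "contains" $H$ if it has a subgraph isomorphic to $H$. $[x]$ denotes the greatest integer not exceeding $x$; $e(G)$ is the number of edges and $\Delta(G)$ the maximum degree of $G$. For a graph $L$ and $p\in\mathbb N$, $ex(p;L)$ is the maximum number of edges in a graph on $p$ vertices containing no copy of $L$, and $Ex(p;L)$ is the set of graphs on $p$ vertices containing no copy of $L$ and having exactly $ex(p;L)$ edges. For $n\ge 5$, $T_n^2$ is the tree with vertex set $\{v_0,\ldots,v_{n-1}\}$ and edge set $\{v_0v_1,\ldots,v_0v_{n-3},\,v_{n-3}v_{n-2},\,v_{n-3}v_{n-1}\}$. *)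

theory Defs
  imports Main
begin

definition sgraph :: "'a set \<Rightarrow> 'a set set \<Rightarrow> bool" where
  "sgraph V E \<longleftrightarrow> finite V \<and> (\<forall>e\<in>E. \<exists>x y. x \<noteq> y \<and> x \<in> V \<and> y \<in> V \<and> e = {x, y})"

definition contains :: "'a set \<Rightarrow> 'a set set \<Rightarrow> 'b set \<Rightarrow> 'b set set \<Rightarrow> bool" where
  "contains V E VH EH \<longleftrightarrow> (\<exists>f. inj_on f VH \<and> f ` VH \<subseteq> V \<and> (\<forall>e\<in>EH. f ` e \<in> E))"

definition T2_verts :: "nat \<Rightarrow> nat set" where
  "T2_verts n = {0..<n}"

definition T2_edges :: "nat \<Rightarrow> nat set set" where
  "T2_edges n = {{0, i} | i. 1 \<le> i \<and> i \<le> n - 3} \<union> {{n - 3, n - 2}, {n - 3, n - 1}}"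

definition ex :: "nat \<Rightarrow> 'b set \<Rightarrow> 'b set set \<Rightarrow> nat" where
  "ex p VL EL = Max {card E | E. sgraph {0..<p} E \<and> \<not> contains {0..<p} E VL EL}"

definition in_Ex :: "nat \<Rightarrow> 'b set \<Rightarrow> 'b set set \<Rightarrow> 'a set \<Rightarrow> 'a set set \<Rightarrow> bool" where
  "in_Ex p VL EL V E \<longleftrightarrow> sgraph V E \<and> card V = p \<and> \<not> contains V E VL EL \<and> card E = ex p VL EL"

definition adj :: "'a set set \<Rightarrow> 'a \<Rightarrow> 'a \<Rightarrow> bool" where
  "adj E u v \<longleftrightarrow> {u, v} \<in> E"

definition connected_graph :: "'a set \<Rightarrow> 'a set set \<Rightarrow> bool" where
  "connected_graph V E \<longleftrightarrow> (\<forall>u\<in>V. \<forall>v\<in>V. (adj E)\<^sup>*\<^sup>* u v)"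

definition degree :: "'a set set \<Rightarrow> 'a \<Rightarrow> nat" where
  "degree E v = card {u. {v, u} \<in> E}"

definition max_degree :: "'a set \<Rightarrow> 'a set set \<Rightarrow> nat" where
  "max_degree V E = Max (degree E ` V)"

end

theory Submission
  imports Defs
begin

definition nb :: "'a set set \<Rightarrow> 'a \<Rightarrow> 'a set" where
  "nb E v = {u. {v, u} \<in> E}"

lemma degree_nb: "degree E v = card (nb E v)"
  by (simp add: degree_def nb_def)

lemma sg_edge: "sgraph V E \<Longrightarrow> e \<in> E \<Longrightarrow> \<exists>a b. a \<noteq> b \<and> a \<in> V \<and> b \<in> V \<and> e = {a, b}"
  by (auto simp: sgraph_def)

lemma sg_finV: "sgraph V E \<Longrightarrow> finite V" by (simp add: sgraph_def)

lemma sg_sub: "sgraph V E \<Longrightarrow> E \<subseteq> Pow V"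
  by (auto simp: sgraph_def)

lemma sg_finE: "sgraph V E \<Longrightarrow> finite E"
  by (meson finite_Pow_iff finite_subset sg_finV sg_sub)

lemma sg_card2: "sgraph V E \<Longrightarrow> e \<in> E \<Longrightarrow> card e = 2"
  by (auto simp: sgraph_def)

lemma nb_sub: "sgraph V E \<Longrightarrow> nb E v \<subseteq> V"
  unfolding nb_def sgraph_def apply auto
  by (metis doubleton_eq_iff insertI1)

lemma nb_fin: "sgraph V E \<Longrightarrow> finite (nb E v)"
  by (metis finite_subset nb_sub sg_finV)

lemma nb_sym: "u \<in> nb E v \<longleftrightarrow> v \<in> nb E u"
  by (simp add: nb_def insert_commute)

lemma nb_irr: "sgraph V E \<Longrightarrow> v \<notin> nb E v"
  unfolding nb_def sgraph_def by auto

lemma nb_in_V: "sgraph V E \<Longrightarrow> u \<in> nb E v \<Longrightarrow> v \<in> V"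
  by (metis nb_sub nb_sym subsetD)

lemma star: assumes "sgraph V E" shows "degree E v = card {e\<in>E. v\<in>e}"
proof -
  have "bij_betw (\<lambda>u. {v,u}) (nb E v) {e\<in>E. v\<in>e}"
  proof (rule bij_betwI')
    fix x y assume "x \<in> nb E v" "y \<in> nb E v"
    then show "({v, x} = {v, y}) = (x = y)" using nb_irr[OF assms] by (metis doubleton_eq_iff)
  next
    fix x assume "x \<in> nb E v" then show "{v, x} \<in> {e \<in> E. v \<in> e}" by (simp add: nb_def)
  next
    fix e assume "e \<in> {e \<in> E. v \<in> e}"
    then obtain a b where "e = {a,b}" "a\<noteq>b" "e\<in>E" "v \<in> e" using sg_edge[OF assms] by blast
    then show "\<exists>x\<in>nb E v. e = {v, x}" unfolding nb_def by (metis empty_iff insertE insert_commute mem_Collect_eq)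
  qed
  then show ?thesis by (simp add: degree_nb bij_betw_same_card)
qed

lemma sum_deg: assumes "sgraph V E" "finite S"
  shows "(\<Sum>y\<in>S. degree E y) = (\<Sum>e\<in>E. card (e \<inter> S))"
proof -
  have "(\<Sum>y\<in>S. degree E y) = (\<Sum>y\<in>S. \<Sum>e\<in>E. if y \<in> e then 1 else 0)"
    using star[OF assms(1)] by (simp add: sum.If_cases sg_finE[OF assms(1)] Int_def)
  also have "\<dots> = (\<Sum>e\<in>E. \<Sum>y\<in>S. if y \<in> e then 1 else 0)" by (rule sum.swap)
  also have "\<dots> = (\<Sum>e\<in>E. card (e \<inter> S))"
    using assms(2) by (simp add: sum.If_cases Int_def conj_commute)
  finally show ?thesis .
qed

lemma handshake: assumes "sgraph V E" shows "(\<Sum>y\<in>V. degree E y) = 2 * card E"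
proof -
  have "(\<Sum>y\<in>V. degree E y) = (\<Sum>e\<in>E. card (e \<inter> V))" using sum_deg assms sg_finV by blast
  also have "\<dots> = (\<Sum>e\<in>E. 2)"
    apply (rule sum.cong, simp)
    using assms sg_sub sg_card2 by (metis Int_absorb2 PowD subsetD)
  finally show ?thesis by simp
qed


lemma touch: assumes sg: "sgraph V E" and SV: "S \<subseteq> V"
  shows "2 * card {e\<in>E. e\<inter>S\<noteq>{}} \<le> (\<Sum>y\<in>S. degree E y + card (nb E y - S))"
proof -
  define Et where "Et = {e\<in>E. e\<inter>S\<noteq>{}}"
  define Ec where "Ec = {e\<in>Et. e - S \<noteq> {}}"
  have finE: "finite E" using sg_finE[OF sg] .
  have finS: "finite S" using SV sg_finV[OF sg] finite_subset by blast
  have finEt: "finite Et" using finE by (simp add: Et_def)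
  have c2: "\<And>e. e \<in> Et \<Longrightarrow> card (e \<inter> S) + card (e - S) = 2"
  proof -
    fix e assume "e \<in> Et"
    then have "card e = 2" "finite e" using sg_card2[OF sg] by (auto simp: Et_def card_ge_0_finite)
    then show "card (e \<inter> S) + card (e - S) = 2"
      by (metis card_Int_Diff)
  qed
  have "2 * card Et = (\<Sum>e\<in>Et. card (e \<inter> S) + card (e - S))" using c2 by simp
  also have "\<dots> = (\<Sum>e\<in>Et. card (e \<inter> S)) + (\<Sum>e\<in>Et. card (e - S))" by (rule sum.distrib)
  also have "(\<Sum>e\<in>Et. card (e \<inter> S)) = (\<Sum>e\<in>E. card (e \<inter> S))"
    by (rule sum.mono_neutral_left) (auto simp: Et_def finE)
  also have "\<dots> = (\<Sum>y\<in>S. degree E y)" using sum_deg[OF sg finS] by simp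
  also have "(\<Sum>e\<in>Et. card (e - S)) \<le> (\<Sum>y\<in>S. card (nb E y - S))"
  proof -
    have le1: "\<And>e. e \<in> Et \<Longrightarrow> card (e - S) \<le> 1"
    proof -
      fix e assume e: "e \<in> Et"
      have "e \<inter> S \<noteq> {}" "finite e" using e sg_card2[OF sg] by (auto simp: Et_def card_ge_0_finite)
      then have "card (e \<inter> S) \<ge> 1"
        by (simp add: Suc_le_eq card_gt_0_iff)
      then show "card (e - S) \<le> 1" using c2[OF e] by linarith
    qed
    have "(\<Sum>e\<in>Et. card (e - S)) = (\<Sum>e\<in>Ec. card (e - S))"
    proof (rule sum.mono_neutral_right)
      show "finite Et" by (rule finEt)
      show "Ec \<subseteq> Et" by (auto simp: Ec_def)
      show "\<forall>i\<in>Et - Ec. card (i - S) = 0" unfolding Ec_def by force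
    qed
    also have "\<dots> \<le> (\<Sum>e\<in>Ec. 1)" by (rule sum_mono) (use le1 Ec_def in auto)
    also have "\<dots> = card Ec" by simp
    also have "\<dots> \<le> card (\<Union>y\<in>S. (\<lambda>t. {y,t}) ` (nb E y - S))"
    proof (rule card_mono)
      show "finite (\<Union>y\<in>S. (\<lambda>t. {y, t}) ` (nb E y - S))"
        using finS nb_fin[OF sg] by auto
      show "Ec \<subseteq> (\<Union>y\<in>S. (\<lambda>t. {y, t}) ` (nb E y - S))"
      proof
        fix e assume "e \<in> Ec"
        then have e: "e \<in> E" "e \<inter> S \<noteq> {}" "e - S \<noteq> {}" by (auto simp: Ec_def Et_def)
        then obtain a b where ab: "e = {a,b}" using sg_edge[OF sg] by blast
        show "e \<in> (\<Union>y\<in>S. (\<lambda>t. {y, t}) ` (nb E y - S))"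
        proof (cases "a \<in> S")
          case True
          then have "b \<notin> S" using e ab by auto
          then show ?thesis using True e ab by (auto simp: nb_def)
        next
          case False
          then have "b \<in> S" using e ab by auto
          have "{a,b} = {b,a}" by (rule insert_commute)
          moreover have "a \<in> nb E b" using e ab \<open>{a,b} = {b,a}\<close> by (simp add: nb_def)
          ultimately show ?thesis using False \<open>b \<in> S\<close> ab by blast
        qed
      qed
    qed
    also have "\<dots> \<le> (\<Sum>y\<in>S. card ((\<lambda>t. {y,t}) ` (nb E y - S)))"
      by (rule card_UN_le[OF finS])
    also have "\<dots> \<le> (\<Sum>y\<in>S. card (nb E y - S))"
      by (rule sum_mono) (simp add: card_image_le nb_fin[OF sg])
    finally show ?thesis .
  qed
  finally show ?thesis by (simp add: Et_def sum.distrib)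
qed

lemma cross: assumes "connected_graph V E" "x \<in> S" "y \<in> V" "x \<in> V" "y \<notin> S"
  shows "\<exists>a\<in>S. \<exists>b. b \<notin> S \<and> {a,b} \<in> E"
proof -
  have "(adj E)\<^sup>*\<^sup>* x y" using assms unfolding connected_graph_def by blast
  then show ?thesis using assms(2,5)
  proof (induction rule: rtranclp_induct)
    case base then show ?case by simp
  next
    case (step y z)
    show ?case
    proof (cases "y \<in> S")
      case True then show ?thesis using step by (auto simp: adj_def)
    next
      case False then show ?thesis using step by blast
    qed
  qed
qed


lemma mkT: assumes sg: "sgraph V E" and n7: "n \<ge> 7" and xu: "u \<in> nb E x"
  and w1: "w1 \<in> nb E u" and w2: "w2 \<in> nb E u" and d12: "w1 \<noteq> w2" and "w1 \<noteq> x" "w2 \<noteq> x"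
  and big: "card (nb E x - {u,w1,w2}) \<ge> n - 4"
  shows "contains V E (T2_verts n) (T2_edges n)"
proof -
  have fin: "finite (nb E x - {u,w1,w2})" using nb_fin[OF sg] by simp
  obtain A where A: "A \<subseteq> nb E x - {u,w1,w2}" "card A = n - 4"
    using obtain_subset_with_card_n[OF big] by blast
  have finA: "finite A" using A fin finite_subset by blast
  obtain as where as: "set as = A" "distinct as" using finite_distinct_list[OF finA] by blast
  have las: "length as = n - 4" using as A distinct_card by fastforce
  define xs where "xs = x # as @ [u,w1,w2]"
  have lxs: "length xs = n" using las n7 by (simp add: xs_def)
  have xnx: "x \<notin> nb E x" using nb_irr[OF sg] .
  have "u \<noteq> x" using xu xnx by auto
  have "u \<noteq> w1" "u \<noteq> w2" using w1 w2 nb_irr[OF sg] by auto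
  have dxs: "distinct xs"
    using as A xnx \<open>u \<noteq> x\<close> \<open>u \<noteq> w1\<close> \<open>u \<noteq> w2\<close> d12 assms(7,8) xu
    by (auto simp: xs_def)
  have xV: "x \<in> V" using nb_in_V[OF sg] xu by (metis nb_sym)
  have setV: "set xs \<subseteq> V"
    using xV A nb_sub[OF sg] xu w1 w2 as by (auto simp: xs_def)
  show ?thesis unfolding contains_def
  proof (intro exI[of _ "nth xs"] conjI)
    show "inj_on ((!) xs) (T2_verts n)" unfolding T2_verts_def
      using dxs lxs by (simp add: inj_on_nth)
    show "(!) xs ` T2_verts n \<subseteq> V" unfolding T2_verts_def using setV lxs
      by (auto simp: nth_mem subset_iff)
    have x0: "xs ! 0 = x" by (simp add: xs_def)
    have xi: "\<And>i. 1 \<le> i \<Longrightarrow> i \<le> n - 4 \<Longrightarrow> xs ! i \<in> nb E x"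
    proof -
      fix i assume "1 \<le> i" "i \<le> n - 4"
      then have "i - 1 < length as" "i \<noteq> 0" using las by auto
      then have "xs ! i = as ! (i - 1)" by (simp add: xs_def nth_Cons' nth_append)
      moreover have "as ! (i - 1) \<in> A" using as las \<open>1 \<le> i\<close> \<open>i \<le> n - 4\<close>
        by (metis One_nat_def diff_less le_eq_less_or_eq less_le_trans nth_mem zero_less_one
                  Suc_le_eq diff_Suc_less)
      ultimately show "xs ! i \<in> nb E x" using A by auto
    qed
    have xs2: "xs = (x # as) @ [u,w1,w2]" by (simp add: xs_def)
    have l1: "length (x # as) = n - 3" using las n7 by simp
    have "n - 3 = length (x # as) + 0" "n - 2 = length (x # as) + 1" "n - 1 = length (x # as) + 2"
      using l1 n7 by auto
    then have xu': "xs ! (n-3) = u" and xw1: "xs ! (n-2) = w1" and xw2: "xs ! (n-1) = w2"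
      unfolding xs2 by (metis nth_append_length_plus nth_Cons_0 nth_Cons_Suc One_nat_def
           numeral_2_eq_2)+
    show "\<forall>e\<in>T2_edges n. (!) xs ` e \<in> E"
    proof
      fix e assume "e \<in> T2_edges n"
      then consider (a) i where "e = {0,i}" "1 \<le> i" "i \<le> n - 3" | (b) "e = {n-3,n-2}" | (c) "e = {n-3,n-1}"
        unfolding T2_edges_def by blast
      then show "(!) xs ` e \<in> E"
      proof cases
        case a
        show ?thesis
        proof (cases "i \<le> n - 4")
          case True
          then show ?thesis using a xi[of i] x0 by (simp add: nb_def)
        next
          case False
          then have "i = n - 3" using a n7 by linarith
          then show ?thesis using a x0 xu' xu by (simp add: nb_def)
        qed
      next
        case b then show ?thesis using xu' xw1 w1 by (simp add: nb_def)
      next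
        case c then show ?thesis using xu' xw2 w2 by (simp add: nb_def)
      qed
    qed
  qed
qed


lemma T_edge0: "1 \<le> i \<Longrightarrow> i \<le> n - 3 \<Longrightarrow> {0,i} \<in> T2_edges n"
  by (auto simp: T2_edges_def)

lemma noT_of_deg: assumes sg: "sgraph V E" and n7: "n \<ge> 7" and dg: "\<forall>y\<in>V. degree E y \<le> n - 4"
  shows "\<not> contains V E (T2_verts n) (T2_edges n)"
proof
  assume "contains V E (T2_verts n) (T2_edges n)"
  then obtain f where f: "inj_on f {0..<n}" "f ` {0..<n} \<subseteq> V" "\<forall>e\<in>T2_edges n. f ` e \<in> E"
    by (auto simp: contains_def T2_verts_def)
  have sub: "f ` {1..n-3} \<subseteq> nb E (f 0)"
  proof
    fix y assume "y \<in> f ` {1..n-3}"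
    then obtain i where "1 \<le> i" "i \<le> n - 3" "y = f i" by auto
    then show "y \<in> nb E (f 0)" using f(3) T_edge0[of i n] by (force simp: nb_def)
  qed
  have "inj_on f {1..n-3}" using f(1) by (rule inj_on_subset) auto
  then have "card (f ` {1..n-3}) = n - 3" by (simp add: card_image)
  then have "n - 3 \<le> degree E (f 0)" using card_mono[OF nb_fin[OF sg] sub] by (simp add: degree_nb)
  moreover have "f 0 \<in> V" using f(2) n7 by auto
  ultimately show False using dg n7 by fastforce
qed

lemma ex_fin: fixes p :: nat shows "finite {card E | E. sgraph {0..<p} E \<and> \<not> contains {0..<p} E VL EL}"
proof -
  have "{card E | E. sgraph {0..<p} E \<and> \<not> contains {0..<p} E VL EL} \<subseteq> card ` Pow (Pow {0..<p})"
    using sg_sub by blast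
  moreover have "finite (card ` Pow (Pow {0..<p}))" by simp
  ultimately show ?thesis by (rule finite_subset)
qed

lemma ex_ge0: fixes p :: nat shows "sgraph {0..<p} E \<Longrightarrow> \<not> contains {0..<p} E VL EL \<Longrightarrow> card E \<le> ex p VL EL"
  unfolding ex_def by (rule Max_ge[OF ex_fin]) blast

lemma ex_ge: assumes sg: "sgraph V E" and cV: "card V = p" and nc: "\<not> contains V E VL EL"
  shows "card E \<le> ex p VL EL"
proof -
  have finV: "finite V" using sg_finV[OF sg] .
  obtain h where h: "bij_betw h {0..<p} V" using ex_bij_betw_nat_finite[OF finV] cV by blast
  define E0 where "E0 = {e. e \<subseteq> {0..<p} \<and> h ` e \<in> E}"
  have injh: "inj_on h {0..<p}" and imh: "h ` {0..<p} = V" using h by (auto simp: bij_betw_def)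
  have bE: "bij_betw (image h) E0 E"
  proof (rule bij_betwI')
    fix a b assume "a \<in> E0" "b \<in> E0"
    then show "(h ` a = h ` b) = (a = b)" using injh by (auto simp: E0_def inj_on_image_eq_iff)
  next
    fix a assume "a \<in> E0" then show "h ` a \<in> E" by (simp add: E0_def)
  next
    fix e assume e: "e \<in> E"
    then have "e \<subseteq> V" using sg_sub[OF sg] by auto
    then have "h ` (inv_into {0..<p} h ` e) = e" using imh by (simp add: image_inv_into_cancel)
    moreover have "inv_into {0..<p} h ` e \<subseteq> {0..<p}" using imh \<open>e \<subseteq> V\<close>
      by (auto intro: inv_into_into)
    ultimately show "\<exists>a\<in>E0. e = h ` a" using e unfolding E0_def by (metis (mono_tags, lifting) mem_Collect_eq)
  qed
  have sg0: "sgraph {0..<p} E0"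
    unfolding sgraph_def
  proof (intro conjI ballI)
    show "finite {0..<p}" by simp
    fix e assume "e \<in> E0"
    then have e: "e \<subseteq> {0..<p}" "h ` e \<in> E" by (auto simp: E0_def)
    then obtain a b where ab: "a \<noteq> b" "h ` e = {a,b}" using sg_edge[OF sg] by blast
    then obtain a' b' where "a' \<in> e" "b' \<in> e" "h a' = a" "h b' = b"
      by (metis imageE insertI1 insert_commute)
    moreover have "\<forall>z\<in>e. z = a' \<or> z = b'"
    proof
      fix z assume "z \<in> e"
      then have "h z \<in> {a,b}" using ab by auto
      then show "z = a' \<or> z = b'" using injh e(1) \<open>z\<in>e\<close> calculation
        by (auto simp: inj_on_def subset_iff)
    qed
    ultimately show "\<exists>x y. x \<noteq> y \<and> x \<in> {0..<p} \<and> y \<in> {0..<p} \<and> e = {x, y}"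
      using e(1) ab(1) by (intro exI[of _ a'] exI[of _ b']) auto
  qed
  have nc0: "\<not> contains {0..<p} E0 VL EL"
  proof
    assume "contains {0..<p} E0 VL EL"
    then obtain f where f: "inj_on f VL" "f ` VL \<subseteq> {0..<p}" "\<forall>e\<in>EL. f ` e \<in> E0"
      by (auto simp: contains_def)
    have "inj_on (h \<circ> f) VL" using f(1,2) injh by (simp add: comp_inj_on inj_on_subset)
    moreover have "(h \<circ> f) ` VL \<subseteq> V" using f(2) imh by (auto simp: image_comp[symmetric])
    moreover have "\<forall>e\<in>EL. (h \<circ> f) ` e \<in> E" using f(3) by (simp add: E0_def image_comp)
    ultimately have "contains V E VL EL" unfolding contains_def by blast
    with nc show False by simp
  qed
  have "card E = card E0" using bE by (simp add: bij_betw_same_card)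
  also have "\<dots> \<le> ex p VL EL" by (rule ex_ge0[OF sg0 nc0])
  finally show ?thesis .
qed


lemma T_conn: assumes n7: "n \<ge> 7" and sym: "\<And>a b. {a,b} \<in> T2_edges n \<Longrightarrow> P a \<longleftrightarrow> P b"
  and i: "i < n" shows "P i \<longleftrightarrow> P 0"
proof -
  have e0: "\<And>j. 1 \<le> j \<Longrightarrow> j \<le> n - 3 \<Longrightarrow> P j \<longleftrightarrow> P 0" using sym T_edge0 by metis
  have "{n-3,n-2} \<in> T2_edges n" "{n-3,n-1} \<in> T2_edges n" by (auto simp: T2_edges_def)
  then have "P (n-2) \<longleftrightarrow> P (n-3)" "P (n-1) \<longleftrightarrow> P (n-3)" using sym by blast+
  moreover have "P (n-3) \<longleftrightarrow> P 0" using e0 n7 by simp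
  ultimately show ?thesis
  proof -
    assume h: "P (n-2) \<longleftrightarrow> P (n-3)" "P (n-1) \<longleftrightarrow> P (n-3)" "P (n-3) \<longleftrightarrow> P 0"
    consider "i = 0" | "1 \<le> i \<and> i \<le> n - 3" | "i = n - 2" | "i = n - 1" using i n7 by linarith
    then show ?thesis using h e0 by cases auto
  qed
qed

lemma improve: assumes sg: "sgraph V E" and nc: "\<not> contains V E (T2_verts n) (T2_edges n)"
  and n7: "n \<ge> 7" and SV: "S \<subseteq> V" and cS: "card S < n"
  and sm: "(\<Sum>y\<in>S. degree E y + card (nb E y - S)) < card S * (card S - 1)"
  shows "card E < ex (card V) (T2_verts n) (T2_edges n)"
proof -
  define Et where "Et = {e\<in>E. e\<inter>S\<noteq>{}}"
  define P where "P = {A. A \<subseteq> S \<and> card A = 2}"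
  define E' where "E' = (E - Et) \<union> P"
  have finS: "finite S" using SV sg_finV[OF sg] finite_subset by blast
  have finE: "finite E" using sg_finE[OF sg] .
  have cP: "card P = card S choose 2" unfolding P_def using n_subsets[OF finS] by simp
  have "2 * card Et < card S * (card S - 1)" using touch[OF sg SV] sm by (simp add: Et_def)
  moreover have "even (card S * (card S - 1))" by (cases "even (card S)") auto
  then obtain m where "card S * (card S - 1) = 2 * m" by (rule dvdE)
  ultimately have EtP: "card Et < card P" unfolding cP choose_two by simp
  have finP: "finite P" unfolding P_def using finS by (simp add: finite_subset[of _ "Pow S"] subset_iff)
  have disj: "(E - Et) \<inter> P = {}" unfolding P_def Et_def
    by auto (metis card_2_iff Int_absorb2 insert_not_empty)
  have "card E' = card (E - Et) + card P" unfolding E'_def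
    by (rule card_Un_disjoint) (use finE finP disj in auto)
  moreover have "card (E - Et) = card E - card Et" using finE by (simp add: Et_def card_Diff_subset)
  moreover have "card Et \<le> card E" using finE by (simp add: Et_def card_mono)
  ultimately have more: "card E < card E'" using EtP by linarith
  have sg': "sgraph V E'" unfolding sgraph_def
  proof (intro conjI ballI)
    show "finite V" using sg_finV[OF sg] .
    fix e assume "e \<in> E'"
    then consider "e \<in> E" | "e \<in> P" unfolding E'_def by blast
    then show "\<exists>x y. x \<noteq> y \<and> x \<in> V \<and> y \<in> V \<and> e = {x, y}"
    proof cases
      case 1 then show ?thesis using sg_edge[OF sg] by blast
    next
      case 2 then show ?thesis unfolding P_def using SV by (auto simp: card_2_iff)
    qed
  qed
  have nc': "\<not> contains V E' (T2_verts n) (T2_edges n)"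
  proof
    assume "contains V E' (T2_verts n) (T2_edges n)"
    then obtain f where f: "inj_on f {0..<n}" "f ` {0..<n} \<subseteq> V" "\<forall>e\<in>T2_edges n. f ` e \<in> E'"
      by (auto simp: contains_def T2_verts_def)
    have sym: "\<And>a b. {a,b} \<in> T2_edges n \<Longrightarrow> f a \<in> S \<longleftrightarrow> f b \<in> S"
    proof -
      fix a b assume "{a,b} \<in> T2_edges n"
      then have "{f a, f b} \<in> E'" using f(3) by force
      then show "f a \<in> S \<longleftrightarrow> f b \<in> S" unfolding E'_def P_def Et_def by auto
    qed
    have all: "\<And>i. i < n \<Longrightarrow> f i \<in> S \<longleftrightarrow> f 0 \<in> S"
      using T_conn[OF n7, of "\<lambda>i. f i \<in> S"] sym by blast
    show False
    proof (cases "f 0 \<in> S")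
      case True
      then have "f ` {0..<n} \<subseteq> S" using all by auto
      then have "card (f ` {0..<n}) \<le> card S" using finS by (simp add: card_mono)
      then show False using card_image[OF f(1)] cS by simp
    next
      case False
      have Tsub: "\<And>e. e \<in> T2_edges n \<Longrightarrow> e \<subseteq> {0..<n}" using n7 by (auto simp: T2_edges_def)
      have "\<forall>e\<in>T2_edges n. f ` e \<in> E"
      proof
        fix e assume e: "e \<in> T2_edges n"
        then have "f ` e \<inter> S = {}" using all False Tsub[OF e] by auto
        moreover have "e \<noteq> {}" using e by (auto simp: T2_edges_def)
        ultimately have "f ` e \<notin> P" unfolding P_def by auto
        then show "f ` e \<in> E" using f(3) e unfolding E'_def by auto
      qed
      then have "contains V E (T2_verts n) (T2_edges n)"
        unfolding contains_def T2_verts_def using f(1,2) by blast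
      then show False using nc by simp
    qed
  qed
  have "card E' \<le> ex (card V) (T2_verts n) (T2_edges n)" by (rule ex_ge[OF sg' refl nc'])
  then show ?thesis using more by simp
qed


lemma two_elems: assumes "finite A" "card A \<ge> 2" obtains a b where "a \<in> A" "b \<in> A" "a \<noteq> b"
proof -
  obtain B where "B \<subseteq> A" "card B = 2" using obtain_subset_with_card_n[OF assms(2)] by blast
  then show ?thesis using that by (auto simp: card_2_iff)
qed

lemma out1: assumes sg: "sgraph V E" and nc: "\<not> contains V E (T2_verts n) (T2_edges n)"
  and n7: "n \<ge> 7" and dx: "degree E x \<ge> n - 3" and u: "u \<in> nb E x"
  shows "card (nb E u - insert x (nb E x)) \<le> 1"
proof (rule ccontr)
  assume "\<not> ?thesis"
  then obtain w1 w2 where w: "w1 \<in> nb E u - insert x (nb E x)" "w2 \<in> nb E u - insert x (nb E x)" "w1 \<noteq> w2"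
    using two_elems[of "nb E u - insert x (nb E x)"] nb_fin[OF sg] by (metis finite_Diff not_le Suc_1 Suc_leI)
  have "nb E x - {u,w1,w2} = nb E x - {u}" using w by auto
  then have "card (nb E x - {u,w1,w2}) = degree E x - 1" using u nb_fin[OF sg] by (simp add: degree_nb)
  then have "card (nb E x - {u,w1,w2}) \<ge> n - 4" using dx by linarith
  then have "contains V E (T2_verts n) (T2_edges n)"
    using mkT[OF sg n7 u, of w1 w2] w by auto
  then show False using nc by simp
qed

lemma n2: assumes sg: "sgraph V E" and nc: "\<not> contains V E (T2_verts n) (T2_edges n)"
  and n7: "n \<ge> 7" and dx: "degree E x \<ge> n - 2" and u: "u \<in> nb E x"
  and t: "t \<in> nb E u - insert x (nb E x)"
  shows "nb E u \<subseteq> {x, t}"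
proof
  fix w2 assume w2: "w2 \<in> nb E u"
  show "w2 \<in> {x, t}"
  proof (rule ccontr)
    assume "w2 \<notin> {x, t}"
    have "nb E x - {u,w2} \<subseteq> nb E x - {u,t,w2}" using t by auto
    moreover have "card (nb E x) - card {u,w2} \<le> card (nb E x - {u,w2})"
      by (rule diff_card_le_card_Diff) simp
    moreover have "card {u,w2} \<le> 2" by (simp add: card_insert_le_m1)
    ultimately have "card (nb E x - {u,t,w2}) \<ge> n - 4"
      using dx card_mono[of "nb E x - {u,t,w2}" "nb E x - {u,w2}"] nb_fin[OF sg]
      by (simp add: degree_nb)
    then have "contains V E (T2_verts n) (T2_edges n)"
      using mkT[OF sg n7 u, of t w2] t w2 \<open>w2 \<notin> {x, t}\<close> by auto
    then show False using nc by simp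
  qed
qed

lemma n1: assumes sg: "sgraph V E" and nc: "\<not> contains V E (T2_verts n) (T2_edges n)"
  and n7: "n \<ge> 7" and dx: "degree E x \<ge> n - 1" and u: "u \<in> nb E x"
  shows "degree E u \<le> 2"
proof (rule ccontr)
  assume "\<not> ?thesis"
  then have "card (nb E u - {x}) \<ge> 2" using nb_fin[OF sg]
    by (metis degree_nb card_Diff_singleton_if diff_le_mono not_le Suc_1 Suc_leI diff_Suc_1
        le_diff_conv add_leD1)
  then obtain w1 w2 where w: "w1 \<in> nb E u - {x}" "w2 \<in> nb E u - {x}" "w1 \<noteq> w2"
    using two_elems[of "nb E u - {x}"] nb_fin[OF sg] by (metis finite_Diff)
  have "card (nb E x) - card {u,w1,w2} \<le> card (nb E x - {u,w1,w2})"
    by (rule diff_card_le_card_Diff) simp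
  moreover have "card {u,w1,w2} \<le> 3" by (simp add: card_insert_le_m1)
  ultimately have "card (nb E x - {u,w1,w2}) \<ge> n - 4" using dx by (simp add: degree_nb)
  then have "contains V E (T2_verts n) (T2_edges n)"
    using mkT[OF sg n7 u, of w1 w2] w by auto
  then show False using nc by simp
qed


lemma deg_le_card_diff: "sgraph V E \<Longrightarrow> card (nb E y - S) \<le> degree E y"
  by (simp add: degree_nb card_mono nb_fin)

lemma delta: assumes sg: "sgraph V E" and nc: "\<not> contains V E (T2_verts n) (T2_edges n)"
  and n7: "n \<ge> 7" and pn: "card V \<ge> n" and cE: "card E = ex (card V) (T2_verts n) (T2_edges n)"
  and con: "connected_graph V E"
  shows "\<forall>y\<in>V. degree E y \<le> n - 4"
proof (rule ccontr)
  assume neg: "\<not> (\<forall>y\<in>V. degree E y \<le> n - 4)"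
  define d where "d = Max (degree E ` V)"
  have finV: "finite V" using sg_finV[OF sg] .
  have Vne: "V \<noteq> {}" using pn n7 by auto
  have "d \<in> degree E ` V" unfolding d_def using finV Vne by (intro Max_in) auto
  then obtain x where xV: "x \<in> V" and dx: "degree E x = d" by auto
  have dle: "\<And>y. degree E y \<le> d"
  proof -
    fix y show "degree E y \<le> d"
    proof (cases "y \<in> V")
      case True then show ?thesis unfolding d_def using finV by simp
    next
      case False
      then have "nb E y = {}" using nb_in_V[OF sg] by blast
      then show ?thesis by (simp add: degree_nb)
    qed
  qed
  have dge: "d \<ge> n - 3"
  proof -
    obtain y where "y \<in> V" "degree E y > n - 4" using neg by (auto simp: not_le)
    then show ?thesis using dle[of y] n7 by linarith
  qed
  have imp: "\<And>S. S \<subseteq> V \<Longrightarrow> card S < n \<Longrightarrow>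
     (\<Sum>y\<in>S. degree E y + card (nb E y - S)) < card S * (card S - 1) \<Longrightarrow> False"
  proof -
    fix S assume "S \<subseteq> V" "card S < n" "(\<Sum>y\<in>S. degree E y + card (nb E y - S)) < card S * (card S - 1)"
    then have "card E < ex (card V) (T2_verts n) (T2_edges n)" by (rule improve[OF sg nc n7])
    then show False using cE by simp
  qed
  have nbV: "nb E x \<subseteq> V" using nb_sub[OF sg] .
  have finN: "finite (nb E x)" using nb_fin[OF sg] .
  have xN: "x \<notin> nb E x" using nb_irr[OF sg] .
  define S0 where "S0 = insert x (nb E x)"
  have S0V: "S0 \<subseteq> V" using xV nbV by (simp add: S0_def)
  have cS0: "card S0 = d + 1" using finN xN dx by (simp add: S0_def degree_nb)
  have crossS0: "d \<le> n - 2 \<Longrightarrow> \<exists>u0 w0. u0 \<in> nb E x \<and> w0 \<in> nb E u0 - S0"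
  proof -
    assume "d \<le> n - 2"
    then have "card S0 < card V" using cS0 pn n7 by linarith
    moreover have "finite S0" using finN by (simp add: S0_def)
    ultimately have "\<not> V \<subseteq> S0" using card_mono by (metis not_le)
    then obtain y where "y \<in> V" "y \<notin> S0" by blast
    then obtain a b where ab: "a \<in> S0" "b \<notin> S0" "{a,b} \<in> E"
      using cross[OF con, of x S0 y] xV by (auto simp: S0_def)
    have "a \<noteq> x" using ab by (auto simp: S0_def nb_def)
    then have "a \<in> nb E x" using ab by (simp add: S0_def)
    moreover have "b \<in> nb E a - S0" using ab by (simp add: nb_def)
    ultimately show ?thesis by blast
  qed
  consider "d \<ge> n - 1" | "d = n - 2" | "d = n - 3" using dge by linarith
  then show False
  proof cases
    case 1
    have "n - 1 \<le> card (nb E x)" using 1 dx by (simp add: degree_nb)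
    then obtain S where S: "S \<subseteq> nb E x" "card S = n - 1" by (rule obtain_subset_with_card_n)
    have d2: "\<And>y. y \<in> S \<Longrightarrow> degree E y \<le> 2"
    proof -
      fix y assume "y \<in> S"
      then have "y \<in> nb E x" using S(1) by blast
      moreover have "degree E x \<ge> n - 1" using 1 dx by simp
      ultimately show "degree E y \<le> 2" using n1[OF sg nc n7] by blast
    qed
    have "(\<Sum>y\<in>S. degree E y + card (nb E y - S)) \<le> (\<Sum>y\<in>S. 4)"
    proof (rule sum_mono)
      fix y assume "y \<in> S"
      then have "degree E y \<le> 2" by (rule d2)
      moreover have "card (nb E y - S) \<le> degree E y" by (rule deg_le_card_diff[OF sg])
      ultimately show "degree E y + card (nb E y - S) \<le> 4" by linarith
    qed
    also have "\<dots> = 4 * (n - 1)" using S by simp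
    also have "\<dots> < (n - 1) * (n - 1 - 1)"
    proof -
      have "4 < n - 1 - 1" "0 < n - 1" using n7 by linarith+
      then have "4 * (n - 1) < (n - 1 - 1) * (n - 1)" by (intro mult_strict_right_mono)
      then show ?thesis by (simp only: mult.commute)
    qed
    finally have "(\<Sum>y\<in>S. degree E y + card (nb E y - S)) < card S * (card S - 1)" using S by simp
    moreover have "S \<subseteq> V" using S nbV by blast
    moreover have "card S < n" using S n7 by simp
    ultimately show False using imp by blast
  next
    case 2
    obtain u0 w0 where uw: "u0 \<in> nb E x" "w0 \<in> nb E u0 - S0" using crossS0 2 by auto
    have g: "\<And>y. y \<in> S0 \<Longrightarrow> degree E y + card (nb E y - S0) \<le> d"
      and g0: "degree E u0 + card (nb E u0 - S0) \<le> 3"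
    proof -
      have gen: "\<And>u t. u \<in> nb E x \<Longrightarrow> t \<in> nb E u - S0 \<Longrightarrow> degree E u + card (nb E u - S0) \<le> 3"
      proof -
        fix u t assume u: "u \<in> nb E x" and t: "t \<in> nb E u - S0"
        have sub: "nb E u \<subseteq> {x,t}" using n2[OF sg nc n7 _ u, of t] 2 dx t by (simp add: S0_def)
        have "card {x,t} \<le> 2" by (simp add: card_insert_if)
        then have "degree E u \<le> 2" unfolding degree_nb using card_mono[OF _ sub] by simp
        moreover have "nb E u - S0 \<subseteq> {t}" using sub by (auto simp: S0_def)
        then have "card (nb E u - S0) \<le> 1" using card_mono[of "{t}"] by simp
        ultimately show "degree E u + card (nb E u - S0) \<le> 3" by simp
      qed
      show "degree E u0 + card (nb E u0 - S0) \<le> 3" using gen uw by blast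
      fix y assume y: "y \<in> S0"
      show "degree E y + card (nb E y - S0) \<le> d"
      proof (cases "y = x")
        case True then show ?thesis using dx by (simp add: S0_def subset_insertI)
      next
        case False
        then have yN: "y \<in> nb E x" using y by (simp add: S0_def)
        show ?thesis
        proof (cases "nb E y - S0 = {}")
          case True then have "card (nb E y - S0) = 0" by (simp only: card.empty)
          then show ?thesis using dle[of y] by linarith
        next
          case False
          then obtain t where "t \<in> nb E y - S0" by blast
          then show ?thesis using gen[OF yN] 2 n7 by fastforce
        qed
      qed
    qed
    have u0S: "u0 \<in> S0" using uw by (simp add: S0_def)
    have finS0: "finite S0" using finN by (simp add: S0_def)
    have "(\<Sum>y\<in>S0. degree E y + card (nb E y - S0))
        = (degree E u0 + card (nb E u0 - S0)) + (\<Sum>y\<in>S0 - {u0}. degree E y + card (nb E y - S0))"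
      using sum.remove[OF finS0 u0S] by blast
    also have "\<dots> \<le> 3 + (\<Sum>y\<in>S0 - {u0}. d)"
      using g0 g by (intro add_mono sum_mono) auto
    also have "\<dots> = 3 + d * d" using cS0 u0S finS0 by simp
    also have "\<dots> < (d + 1) * d" using 2 n7 by simp
    finally have "(\<Sum>y\<in>S0. degree E y + card (nb E y - S0)) < card S0 * (card S0 - 1)" using cS0 by simp
    moreover have "card S0 < n" using cS0 2 n7 by simp
    ultimately show False using imp S0V by blast
  next
    case 3
    have "d \<le> n - 2" using 3 by linarith
    then obtain u0 w0 where uw: "u0 \<in> nb E x" "w0 \<in> nb E u0 - S0" using crossS0 by blast
    have o1: "\<And>u. u \<in> nb E x \<Longrightarrow> card (nb E u - S0) \<le> 1"
      using out1[OF sg nc n7] dx 3 by (simp add: S0_def)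
    have finS0: "finite S0" using finN by (simp add: S0_def)
    have sumS: "\<And>w (g::_\<Rightarrow>nat). w \<notin> S0 \<Longrightarrow> (\<Sum>y\<in>insert w S0. g y) = g w + g x + (\<Sum>y\<in>nb E x. g y)"
      using finS0 finN xN by (simp add: S0_def)
    show False
    proof (cases "\<exists>u\<in>nb E x. degree E u = d \<and> nb E u - S0 \<noteq> {}")
      case True
      then obtain us w where us: "us \<in> nb E x" "degree E us = d" "w \<in> nb E us - S0" by blast
      define S where "S = insert w S0"
      have wV: "w \<in> V" using us nb_sub[OF sg] by blast
      have SV: "S \<subseteq> V" using S0V wV by (simp add: S_def)
      have cS: "card S = d + 2" using cS0 us finS0 by (simp add: S_def)
      have gx: "degree E x + card (nb E x - S) \<le> d"
      proof -
        have "nb E x - S = {}" by (auto simp: S_def S0_def)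
        then have "card (nb E x - S) = 0" by (simp only: card.empty)
        then show ?thesis using dx by linarith
      qed
      have gu: "\<And>u. u \<in> nb E x \<Longrightarrow> degree E u + card (nb E u - S) \<le> d + 1"
      proof -
        fix u assume u: "u \<in> nb E x"
        have "card (nb E u - S) \<le> card (nb E u - S0)"
          by (rule card_mono) (auto simp: S_def nb_fin[OF sg])
        then show "degree E u + card (nb E u - S) \<le> d + 1" using o1[OF u] dle[of u] by linarith
      qed
      have gw: "degree E w + card (nb E w - S) \<le> d + 1"
      proof -
        have "nb E us - S0 \<subseteq> {w}"
        proof
          fix z assume z: "z \<in> nb E us - S0"
          show "z \<in> {w}"
          proof (rule ccontr)
            assume "z \<notin> {w}"
            then have "{z, w} \<subseteq> nb E us - S0" using z us by auto
            then have "card {z,w} \<le> card (nb E us - S0)" by (rule card_mono[rotated]) (simp add: nb_fin[OF sg])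
            then show False using o1[OF us(1)] \<open>z \<notin> {w}\<close> by simp
          qed
        qed
        then have "insert us (nb E us) \<subseteq> S" using us by (auto simp: S_def S0_def)
        then have "nb E w - S \<subseteq> nb E w - insert us (nb E us)" by auto
        moreover have "card (nb E w - insert us (nb E us)) \<le> 1"
          using out1[OF sg nc n7, of us w] us 3 by simp
        ultimately have "card (nb E w - S) \<le> 1"
          by (meson card_mono finite_Diff nb_fin[OF sg] le_trans)
        then show ?thesis using dle[of w] by linarith
      qed
      have "(\<Sum>y\<in>S. degree E y + card (nb E y - S))
          = (degree E w + card (nb E w - S)) + (degree E x + card (nb E x - S))
            + (\<Sum>y\<in>nb E x. degree E y + card (nb E y - S))"
        unfolding S_def using sumS[of w] us by simp
      also have "\<dots> \<le> (d + 1) + d + (\<Sum>y\<in>nb E x. d + 1)"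
      proof -
        have "(\<Sum>y\<in>nb E x. degree E y + card (nb E y - S)) \<le> (\<Sum>y\<in>nb E x. d + 1)"
          by (rule sum_mono) (rule gu)
        then show ?thesis using gw gx by linarith
      qed
      also have "\<dots> = (d + 1) + d + d * (d + 1)" using dx by (simp add: degree_nb)
      also have "\<dots> < (d + 2) * (d + 1)" by simp
      finally have "(\<Sum>y\<in>S. degree E y + card (nb E y - S)) < card S * (card S - 1)" using cS by simp
      moreover have "card S < n" using cS 3 n7 by simp
      ultimately show False using imp SV by blast
    next
      case False
      define w where "w = w0"
      define S where "S = insert w S0"
      have wS0: "w \<notin> S0" using uw by (simp add: w_def)
      have wV: "w \<in> V" using uw nb_sub[OF sg] by (auto simp: w_def)
      have SV: "S \<subseteq> V" using S0V wV by (simp add: S_def)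
      have cS: "card S = d + 2" using cS0 wS0 finS0 by (simp add: S_def)
      have gx: "degree E x + card (nb E x - S) \<le> d"
      proof -
        have "nb E x - S = {}" by (auto simp: S_def S0_def)
        then have "card (nb E x - S) = 0" by (simp only: card.empty)
        then show ?thesis using dx by linarith
      qed
      have gu: "\<And>u. u \<in> nb E x \<Longrightarrow> degree E u + card (nb E u - S) \<le> d"
      proof -
        fix u assume u: "u \<in> nb E x"
        have le: "card (nb E u - S) \<le> card (nb E u - S0)"
          by (rule card_mono) (auto simp: S_def nb_fin[OF sg])
        show "degree E u + card (nb E u - S) \<le> d"
        proof (cases "nb E u - S0 = {}")
          case True then have "card (nb E u - S0) = 0" by (simp only: card.empty)
          then show ?thesis using le dle[of u] by linarith
        next
          case F: False
          then have "degree E u \<noteq> d" using False u by blast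
          then show ?thesis using le o1[OF u] dle[of u] by linarith
        qed
      qed
      have gw: "degree E w + card (nb E w - S) \<le> 2 * d - 1"
      proof -
        have "u0 \<in> nb E w" using uw nb_sym[of u0 E w0] by (simp add: w_def)
        moreover have "u0 \<in> S" using uw by (simp add: S_def S0_def)
        ultimately have "nb E w - S \<subseteq> nb E w - {u0}" by auto
        then have "card (nb E w - S) \<le> degree E w - 1"
          using \<open>u0 \<in> nb E w\<close> nb_fin[OF sg]
          by (metis card_Diff_singleton card_mono degree_nb finite_Diff)
        moreover have "degree E w \<ge> 1" using \<open>u0 \<in> nb E w\<close> nb_fin[OF sg]
          by (metis card_0_eq degree_nb empty_iff less_one not_le)
        ultimately show ?thesis using dle[of w] by linarith
      qed
      have "(\<Sum>y\<in>S. degree E y + card (nb E y - S))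
          = (degree E w + card (nb E w - S)) + (degree E x + card (nb E x - S))
            + (\<Sum>y\<in>nb E x. degree E y + card (nb E y - S))"
        unfolding S_def using sumS[of w] wS0 by simp
      also have "\<dots> \<le> (2 * d - 1) + d + (\<Sum>y\<in>nb E x. d)"
      proof -
        have "(\<Sum>y\<in>nb E x. degree E y + card (nb E y - S)) \<le> (\<Sum>y\<in>nb E x. d)"
          by (rule sum_mono) (rule gu)
        then show ?thesis using gw gx by linarith
      qed
      also have "\<dots> = (2 * d - 1) + d + d * d" using dx by (simp add: degree_nb)
      also have "\<dots> < (d + 2) * (d + 1)" by (simp add: algebra_simps)
      finally have "(\<Sum>y\<in>S. degree E y + card (nb E y - S)) < card S * (card S - 1)" using cS by simp
      moreover have "card S < n" using cS 3 n7 by simp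
      ultimately show False using imp SV by blast
    qed
  qed
qed

lemma circ: fixes k p :: nat assumes k3: "k \<ge> 3" and pk: "p \<ge> k + 4"
  shows "\<exists>E. sgraph {0..<p} E \<and> (\<forall>y. degree E y \<le> k) \<and> k * p div 2 \<le> card E"
proof -
  define h where "h = k div 2"
  define q where "q = p div 2"
  define wr where "wr a = (if a < p then a else a - p)" for a
  have h1: "1 \<le> h" using k3 by (simp add: h_def)
  have hp: "2 * h < p" using pk by (simp add: h_def)
  have hq: "h < q" using pk by (simp add: h_def q_def)
  have q2: "2 * q \<le> p" by (simp add: q_def)
  define D where "D = (\<lambda>(i,j). {i, wr (i+j)}) ` ({0..<p} \<times> {1..h})"
  define M where "M = (if odd k then (\<lambda>i. {i, i+q}) ` {0..<q} else {})"
  define E where "E = D \<union> M"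
  have finD: "finite D" by (simp add: D_def)
  have finM: "finite M" by (simp add: M_def)
  have sg: "sgraph {0..<p} E" unfolding sgraph_def
  proof (intro conjI ballI)
    show "finite {0..<p}" by simp
    fix e assume "e \<in> E"
    then consider (d) i j where "e = {i, wr (i+j)}" "i < p" "1 \<le> j" "j \<le> h"
      | (m) i where "e = {i, i+q}" "i < q"
      unfolding E_def D_def M_def by (auto split: if_splits)
    then show "\<exists>x y. x \<noteq> y \<and> x \<in> {0..<p} \<and> y \<in> {0..<p} \<and> e = {x, y}"
    proof cases
      case d
      have "wr (i+j) \<noteq> i" "wr (i+j) < p" using d hp unfolding wr_def by auto
      then show ?thesis using d by (intro exI[of _ i] exI[of _ "wr (i+j)"]) auto
    next
      case m
      have "i + q \<noteq> i" "i + q < p" using m q2 hq by auto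
      then show ?thesis using m q2 by (intro exI[of _ i] exI[of _ "i+q"]) auto
    qed
  qed
  have deg: "\<forall>y. degree E y \<le> k"
  proof
    fix v
    define A where "A = (\<lambda>j. wr (v+j)) ` {1..h}"
    define B where "B = (\<lambda>j. wr (v+p-j)) ` {1..h}"
    define C where "C = (if odd k then {if v < q then v+q else v-q} else {})"
    have sub: "nb E v \<subseteq> A \<union> B \<union> C"
    proof
      fix u assume "u \<in> nb E v"
      then have "{v,u} \<in> E" by (simp add: nb_def)
      then consider (d) i j where "{v,u} = {i, wr (i+j)}" "i < p" "1 \<le> j" "j \<le> h"
        | (m) i where "{v,u} = {i, i+q}" "i < q" "odd k"
        unfolding E_def D_def M_def by (auto split: if_splits)
      then show "u \<in> A \<union> B \<union> C"
      proof cases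
        case d
        then consider "v = i" "u = wr (i+j)" | "v = wr (i+j)" "u = i" by (auto simp: doubleton_eq_iff)
        then show ?thesis
        proof cases
          case 1 then show ?thesis using d by (auto simp: A_def)
        next
          case 2
          then have "u = wr (v + p - j)" using d hp unfolding wr_def by auto
          then show ?thesis using d by (auto simp: B_def)
        qed
      next
        case m
        then consider "v = i" "u = i+q" | "v = i+q" "u = i" by (auto simp: doubleton_eq_iff)
        then show ?thesis using m by cases (auto simp: C_def)
      qed
    qed
    have "card (nb E v) \<le> card (A \<union> B \<union> C)"
      by (rule card_mono[OF _ sub]) (simp add: A_def B_def C_def)
    also have "\<dots> \<le> card A + card B + card C" by (meson card_Un_le le_trans add_le_mono le_refl)
    also have "\<dots> \<le> h + h + (if odd k then 1 else 0)"
    proof -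
      have "card A \<le> h" unfolding A_def using card_image_le[of "{1..h}"] by simp
      moreover have "card B \<le> h" unfolding B_def using card_image_le[of "{1..h}"] by simp
      moreover have "card C \<le> (if odd k then 1 else 0)" by (simp add: C_def)
      ultimately show ?thesis by linarith
    qed
    also have "\<dots> = k" unfolding h_def by presburger
    finally show "degree E v \<le> k" by (simp add: degree_nb)
  qed
  have injD: "inj_on (\<lambda>(i,j). {i, wr (i+j)}) ({0..<p} \<times> {1..h})"
  proof (rule inj_onI)
    fix x y assume xy: "x \<in> {0..<p} \<times> {1..h}" "y \<in> {0..<p} \<times> {1..h}"
      "(\<lambda>(i,j). {i, wr (i+j)}) x = (\<lambda>(i,j). {i, wr (i+j)}) y"
    obtain i j where x: "x = (i,j)" by (cases x)
    obtain i' j' where y: "y = (i',j')" by (cases y)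
    have a: "i < p" "1 \<le> j" "j \<le> h" "i' < p" "1 \<le> j'" "j' \<le> h"
      "{i, wr (i + j)} = {i', wr (i' + j')}" using xy x y by auto
    then consider "i = i'" "wr (i+j) = wr (i'+j')" | "i = wr (i'+j')" "wr (i+j) = i'"
      by (auto simp: doubleton_eq_iff)
    then have "i = i' \<and> j = j'"
    proof cases
      case 1 then show ?thesis using a hp unfolding wr_def by (auto split: if_splits)
    next
      case 2 then show ?thesis using a hp unfolding wr_def by (auto split: if_splits)
    qed
    then show "x = y" using x y by simp
  qed
  have cD: "card D = p * h" unfolding D_def using card_image[OF injD] by simp
  have cM: "card M = (if odd k then q else 0)"
    unfolding M_def by (auto simp: card_image inj_on_def doubleton_eq_iff)
  have disj: "D \<inter> M = {}"
  proof (rule ccontr)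
    assume "D \<inter> M \<noteq> {}"
    then obtain i j i' where a: "i < p" "1 \<le> j" "j \<le> h" "i' < q" "{i, wr (i + j)} = {i', i' + q}"
      unfolding D_def M_def by (auto split: if_splits)
    then consider "i = i'" "wr (i+j) = i' + q" | "i = i' + q" "wr (i+j) = i'"
      by (auto simp: doubleton_eq_iff)
    then show False
    proof cases
      case 1 then show ?thesis using a hp hq q2 unfolding wr_def by (auto split: if_splits)
    next
      case 2 then show ?thesis using a hp hq q2 unfolding wr_def by (auto split: if_splits)
    qed
  qed
  have "card E = p * h + (if odd k then q else 0)"
    unfolding E_def using card_Un_disjoint[OF finD finM disj] cD cM by simp
  moreover have "k * p div 2 = p * h + (if odd k then q else 0)"
  proof (cases "odd k")
    case True
    then have "k = 2 * h + 1" by (simp add: h_def)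
    then have "k * p = 2 * (p * h) + p" by (simp add: algebra_simps)
    then show ?thesis using True by (simp add: q_def)
  next
    case False
    then have "k = 2 * h" by (simp add: h_def)
    then show ?thesis using False by simp
  qed
  ultimately show ?thesis using sg deg by auto
qed


theorem lemma3p3:
  fixes p n :: nat and V :: "'a set" and E :: "'a set set"
  assumes "n \<ge> 7" and "p \<ge> n"
    and "in_Ex p (T2_verts n) (T2_edges n) V E"
    and "connected_graph V E"
  shows "max_degree V E = n - 4 \<and> card E = ((n - 4) * p) div 2"
proof -
  have n7: "n \<ge> 7" by (rule assms(1))
  have sg: "sgraph V E" and cV: "card V = p" and nc: "\<not> contains V E (T2_verts n) (T2_edges n)"
    and cE: "card E = ex p (T2_verts n) (T2_edges n)" using assms(3) by (auto simp: in_Ex_def)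
  have dl: "\<forall>y\<in>V. degree E y \<le> n - 4"
    using delta[OF sg nc n7] cV cE assms(2,4) by simp
  have hs: "(\<Sum>y\<in>V. degree E y) = 2 * card E" by (rule handshake[OF sg])
  have "(\<Sum>y\<in>V. degree E y) \<le> card V * (n - 4)" using sum_bounded_above[of V "degree E" "n - 4"] dl by simp
  then have up2: "2 * card E \<le> (n - 4) * p" using hs cV by (simp add: mult.commute)
  then have up: "card E \<le> (n - 4) * p div 2" by linarith
  obtain E0 where E0: "sgraph {0..<p} E0" "\<forall>y. degree E0 y \<le> n - 4" "(n - 4) * p div 2 \<le> card E0"
  proof -
    have "3 \<le> n - 4" "n - 4 + 4 \<le> p" using n7 assms(2) by linarith+
    then show ?thesis using circ[of "n - 4" p] that by blast
  qed
  have "\<not> contains {0..<p} E0 (T2_verts n) (T2_edges n)"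
    using noT_of_deg[OF E0(1) n7] E0(2) by blast
  then have "card E0 \<le> ex p (T2_verts n) (T2_edges n)" by (rule ex_ge0[OF E0(1)])
  then have cEq: "card E = (n - 4) * p div 2" using cE up E0(3) by linarith
  have finV: "finite V" using sg_finV[OF sg] .
  have Vne: "V \<noteq> {}" using cV assms(1,2) by auto
  have mle: "max_degree V E \<le> n - 4" unfolding max_degree_def using finV Vne dl by simp
  have mge: "max_degree V E \<ge> n - 4"
  proof (rule ccontr)
    assume "\<not> ?thesis"
    moreover have "\<forall>y\<in>V. degree E y \<le> max_degree V E" unfolding max_degree_def using finV by simp
    ultimately have "\<forall>y\<in>V. degree E y \<le> n - 5" by fastforce
    then have "(\<Sum>y\<in>V. degree E y) \<le> card V * (n - 5)" using sum_bounded_above[of V "degree E" "n - 5"] by simp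
    then have a: "2 * card E \<le> p * (n - 5)" using hs cV by simp
    have b: "(n - 4) * p \<le> 2 * card E + 1" using cEq by linarith
    have "n - 4 = Suc (n - 5)" using n7 by simp
    then have c: "(n - 4) * p = p * (n - 5) + p" by (simp add: algebra_simps)
    show False using a b c assms(1,2) by linarith
  qed
  show ?thesis using mle mge cEq by simp
qed

end
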